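(* Let $W$ be a complex reflection group and $g\in W$. Suppose that the factors of some reduced reflection factorization $g=t_1\cdots t_k$ form a good generating set for some parabolic subgroup $W_X$ (that is, $\langle t_1,\dots,t_k\rangle=W_X$ and $k=\operatorname{rank}(W_X)$). Then $X=V^g$, $W_X$ is the parabolic closure $W_g$ of $g$, and $\ell_R(g)=\operatorname{codim}(V^g)$.
   Context: A complex reflection group is a finite subgroup of $\mathrm{GL}(V)$, $V$ a finite-dimensional Hermitian space, generated by unitary reflections (unitary maps whose fixed space is a hyperplane). The rank of a reflection group $G$ is $\operatorname{codim}(V^G)$ where $V^G$ is its fixed space. $\ell_R(g)$ is the minimum number of reflections whose product is $g$; a factorization achieving it is reduced. A parabolic subgroup is the pointwise stabilizer of a subset of $V$; $W_X$ denotes the pointwise stabilizer of the flat $X$ (intersection of reflection hyperplanes), and $\operatorname{rank}(W_X)=\operatorname{codim}(X)$. The parabolic closure $W_g$ is the intersection of all parabolic subgroups containing $g$; it equals $W_{V^g}$. *)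

theory Defs
  imports "HOL-Analysis.Analysis"
begin

text \<open>The Hermitian space V is complex^'n with the standard Hermitian form;
 linear maps of V are matrices of type complex^'n^'n acting by (*v).\<close>

type_synonym 'n cmat = "complex ^ 'n ^ 'n"

definition conj_transpose :: "'n::finite cmat \<Rightarrow> 'n cmat" where
  "conj_transpose A = (\<chi> i j. cnj (A $ j $ i))"

definition unitary :: "'n::finite cmat \<Rightarrow> bool" where
  "unitary A \<longleftrightarrow> conj_transpose A ** A = mat 1"

definition fix_space :: "'n::finite cmat \<Rightarrow> (complex ^ 'n) set" where
  "fix_space A = {v. A *v v = v}"

definition codim :: "(complex ^ 'n::finite) set \<Rightarrow> nat" where
  "codim X = CARD('n) - vec.dim X"

definition reflection :: "'n::finite cmat \<Rightarrow> bool" where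
  "reflection A \<longleftrightarrow> unitary A \<and> vec.dim (fix_space A) = CARD('n) - 1"

inductive_set gen_group :: "'n::finite cmat set \<Rightarrow> 'n cmat set" for S where
  gen_one: "mat 1 \<in> gen_group S"
| gen_mul: "s \<in> S \<Longrightarrow> g \<in> gen_group S \<Longrightarrow> s ** g \<in> gen_group S"
| gen_inv: "s \<in> S \<Longrightarrow> g \<in> gen_group S \<Longrightarrow> matrix_inv s ** g \<in> gen_group S"

definition refls :: "'n::finite cmat set \<Rightarrow> 'n cmat set" where
  "refls W = {t \<in> W. reflection t}"

definition cx_refl_group :: "'n::finite cmat set \<Rightarrow> bool" where
  "cx_refl_group W \<longleftrightarrow> finite W \<and> W = gen_group (refls W)"

definition group_fix :: "'n::finite cmat set \<Rightarrow> (complex ^ 'n) set" where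
  "group_fix G = {v. \<forall>g\<in>G. g *v v = v}"

definition group_rank :: "'n::finite cmat set \<Rightarrow> nat" where
  "group_rank G = codim (group_fix G)"

definition mat_prod :: "'n::finite cmat list \<Rightarrow> 'n cmat" where
  "mat_prod ts = foldr (**) ts (mat 1)"

definition refl_length :: "'n::finite cmat set \<Rightarrow> 'n cmat \<Rightarrow> nat" where
  "refl_length W g = (LEAST k. \<exists>ts. length ts = k \<and> set ts \<subseteq> refls W \<and> mat_prod ts = g)"

definition reduced_refl_factorization :: "'n::finite cmat set \<Rightarrow> 'n cmat \<Rightarrow> 'n cmat list \<Rightarrow> bool" where
  "reduced_refl_factorization W g ts \<longleftrightarrow>
     set ts \<subseteq> refls W \<and> mat_prod ts = g \<and> length ts = refl_length W g"

definition pstab :: "'n::finite cmat set \<Rightarrow> (complex ^ 'n) set \<Rightarrow> 'n cmat set" where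
  "pstab W A = {w \<in> W. \<forall>v\<in>A. w *v v = v}"

definition parabolic :: "'n::finite cmat set \<Rightarrow> 'n cmat set \<Rightarrow> bool" where
  "parabolic W P \<longleftrightarrow> (\<exists>A. P = pstab W A)"

text \<open>Flats: intersections of reflection hyperplanes (the empty intersection is V).\<close>
definition flat :: "'n::finite cmat set \<Rightarrow> (complex ^ 'n) set \<Rightarrow> bool" where
  "flat W X \<longleftrightarrow> (\<exists>T \<subseteq> refls W. X = (\<Inter>t\<in>T. fix_space t))"

definition parabolic_closure :: "'n::finite cmat set \<Rightarrow> 'n cmat \<Rightarrow> 'n cmat set" where
  "parabolic_closure W g = \<Inter>{P. parabolic W P \<and> g \<in> P}"

end

theory Submission imports Defs begin



lemma subspace_fix: "vec.subspace (fix_space (A::'n::finite cmat))"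
  unfolding vec.subspace_def fix_space_def
  by (auto simp: matrix_vector_right_distrib vec.scale)

lemma dimv: "vec.dim (UNIV :: (complex^'n::finite) set) = CARD('n)"
  by (simp add: card_cart_basis)

definition herm :: "complex^'n::finite \<Rightarrow> complex^'n \<Rightarrow> complex" where
  "herm a b = (\<Sum>i\<in>UNIV. a$i * cnj (b$i))"

lemma herm_adj: "herm (A *v y) z = herm y (conj_transpose A *v (z::complex^'n::finite))"
proof -
  have "herm (A *v y) z = (\<Sum>i\<in>UNIV. \<Sum>j\<in>UNIV. A$i$j * y$j * cnj (z$i))"
    unfolding herm_def matrix_vector_mult_def by (simp add: sum_distrib_right)
  also have "\<dots> = (\<Sum>j\<in>UNIV. \<Sum>i\<in>UNIV. A$i$j * y$j * cnj (z$i))"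
    by (rule sum.swap)
  also have "\<dots> = herm y (conj_transpose A *v z)"
    unfolding herm_def matrix_vector_mult_def conj_transpose_def
    by (simp add: sum_distrib_left mult_ac)
  finally show ?thesis .
qed

lemma herm_add: "herm u (a + b) = herm u a + herm u b"
  unfolding herm_def by (simp add: algebra_simps sum.distrib)

lemma herm_diff: "herm (a - b) u = herm a u - herm b u"
  unfolding herm_def by (simp add: algebra_simps sum_subtractf)

lemma herm_self0: "herm u u = 0 \<Longrightarrow> u = (0::complex^'n::finite)"
proof -
  assume h: "herm u u = 0"
  have "(\<Sum>i\<in>UNIV. (cmod (u$i))^2) = 0"
  proof -
    have "complex_of_real (\<Sum>i\<in>UNIV. (cmod (u$i))^2) = herm u u"
      unfolding herm_def of_real_sum by (rule sum.cong) (simp_all only: complex_norm_square)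
    with h show ?thesis by (metis of_real_eq_0_iff)
  qed
  then have "\<forall>i\<in>UNIV. (cmod (u$i))^2 = 0"
    by (subst sum_nonneg_eq_0_iff[symmetric]) auto
  then show ?thesis by (simp add: vec_eq_iff)
qed

lemma unitary_fix_orth:
  assumes "unitary A" "A *v x = x"
  shows "herm (A *v y - y) x = 0"
proof -
  have "herm (A *v y) x = herm (A *v y) (A *v x)" using assms by simp
  also have "\<dots> = herm y ((conj_transpose A ** A) *v x)" by (simp add: herm_adj matrix_vector_mul_assoc)
  also have "\<dots> = herm y x" using assms(1) unfolding unitary_def by simp
  finally show ?thesis by (simp add: herm_diff)
qed

lemma ct_mult: "conj_transpose (A ** B) = conj_transpose B ** conj_transpose (A::'n::finite cmat)"
  unfolding conj_transpose_def matrix_matrix_mult_def by (simp add: vec_eq_iff mult_ac)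

lemma unitary_mult: "unitary A \<Longrightarrow> unitary B \<Longrightarrow> unitary (A ** B)"
  unfolding unitary_def ct_mult
  by (metis matrix_mul_assoc matrix_mul_lid)

lemma unitary_prod: "\<forall>t\<in>set (ts::'n::finite cmat list). unitary t \<Longrightarrow> unitary (mat_prod ts)"
proof (induction ts)
  case Nil
  have "conj_transpose (mat 1 :: 'n cmat) = mat 1"
    unfolding conj_transpose_def mat_def by (simp add: vec_eq_iff)
  then show ?case by (simp add: mat_prod_def unitary_def)
next
  case (Cons a ts)
  then show ?case by (simp add: mat_prod_def unitary_mult)
qed


lemma vdim_le: "vec.dim (S::(complex^'n::finite) set) \<le> CARD('n)"
proof -
  have "vec.dim S \<le> vec.dim (UNIV::(complex^'n) set)" by (rule vec.dim_subset) simp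
  then show ?thesis by (simp add: card_cart_basis)
qed

lemma vdim_full: "vec.dim (S::(complex^'n::finite) set) = CARD('n) \<Longrightarrow> vec.span S = UNIV"
  using vec.dim_eq_full[of S] dimv[where 'n='n] vec.dim_UNIV by (simp add: vec.dimension_def)

lemma unitary_inv: "unitary (s::'n::finite cmat) \<Longrightarrow> matrix_inv s ** s = mat 1"
proof -
  assume "unitary s"
  then have a: "conj_transpose s ** s = mat 1" by (simp add: unitary_def)
  then have b: "s ** conj_transpose s = mat 1" using matrix_left_right_inverse by blast
  have "\<exists>A'. s ** A' = mat 1 \<and> A' ** s = mat 1" using a b by blast
  then have "s ** matrix_inv s = mat 1 \<and> matrix_inv s ** s = mat 1"
    unfolding matrix_inv_def by (rule someI_ex)
  then show ?thesis by simp
qed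

definition Fs :: "'n::finite cmat list \<Rightarrow> (complex^'n) set" where
  "Fs ts = (\<Inter>t\<in>set ts. fix_space t)"

lemma Fs_Nil[simp]: "Fs [] = UNIV" by (simp add: Fs_def)
lemma Fs_Cons[simp]: "Fs (t#ts) = fix_space t \<inter> Fs ts" by (simp add: Fs_def)

lemma subspace_Fs: "vec.subspace (Fs ts)"
  unfolding Fs_def by (rule vec.subspace_Int) (rule subspace_fix)

lemma sum_int_bound:
  fixes H A :: "(complex^'n::finite) set"
  assumes "vec.subspace H" "vec.subspace A"
  shows "vec.dim {x + y |x y. x \<in> H \<and> y \<in> A} + vec.dim (H \<inter> A) = vec.dim H + vec.dim A"
    "vec.dim {x + y |x y. x \<in> H \<and> y \<in> A} \<le> CARD('n)"
  using vec.dim_sums_Int[OF assms] apply simp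
  by (rule vdim_le)

lemma Fs_bound:
  assumes "\<forall>t\<in>set (ts::'n::finite cmat list). reflection t"
  shows "vec.dim (Fs ts) + length ts \<ge> CARD('n)"
  using assms
proof (induction ts)
  case Nil
  then show ?case by (simp add: card_cart_basis)
next
  case (Cons t ts)
  have r: "vec.dim (fix_space t) = CARD('n) - 1" using Cons.prems by (simp add: reflection_def)
  have "CARD('n) \<ge> 1" by (simp add: Suc_leI)
  with sum_int_bound[OF subspace_fix[of t] subspace_Fs[of ts]] r Cons show ?case by simp
qed

lemma mp_cons: "mat_prod (t#ts) = t ** mat_prod ts" by (simp add: mat_prod_def)

lemma main_lin:
  assumes "\<forall>t\<in>set ts. reflection t" "length ts \<le> CARD('n::finite)"
    and "vec.dim (Fs ts) = CARD('n) - length ts"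
  shows "fix_space (mat_prod ts) = Fs (ts :: 'n cmat list)"
  using assms
proof (induction ts)
  case Nil
  then show ?case by (simp add: mat_prod_def fix_space_def)
next
  case (Cons t ts)
  let ?H = "fix_space t" and ?A = "Fs ts" and ?h = "mat_prod ts"
  let ?S = "{x + y |x y. x \<in> ?H \<and> y \<in> ?A}"
  have r: "vec.dim ?H = CARD('n) - 1" using Cons.prems by (simp add: reflection_def)
  have b: "vec.dim ?A + length ts \<ge> CARD('n)" using Fs_bound Cons.prems by auto
  note si = sum_int_bound[OF subspace_fix[of t] subspace_Fs[of ts]]
  have dHA: "vec.dim (?H \<inter> ?A) = CARD('n) - Suc (length ts)" using Cons.prems(3) by simp
  have le: "Suc (length ts) \<le> CARD('n)" using Cons.prems(2) by simp
  have dA: "vec.dim ?A = CARD('n) - length ts" using si r b dHA le by arith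
  have dS: "vec.dim ?S = CARD('n)" using si r b dHA le by arith
  have SU: "?S = UNIV"
  proof -
    have 1: "vec.span ?S = UNIV" using dS by (rule vdim_full)
    have 2: "vec.subspace ?S" by (rule vec.subspace_sums[OF subspace_fix subspace_Fs])
    have 3: "vec.span ?S = ?S" using 2 by (simp only: vec.span_eq_iff)
    show ?thesis using 1 3 by (simp only:)
  qed
  have IH: "fix_space ?h = ?A" using Cons.IH Cons.prems(1) le dA by simp
  have ut: "unitary t" using Cons.prems by (simp add: reflection_def)
  have uh: "unitary ?h" using Cons.prems by (intro unitary_prod) (simp add: reflection_def)
  have "v \<in> ?H \<inter> ?A" if v: "v \<in> fix_space (mat_prod (t#ts))" for v
  proof -
    let ?w = "?h *v v"
    have "(t ** ?h) *v v = v" using v mp_cons[of t ts] unfolding fix_space_def by simp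
    then have tw: "t *v ?w = v" by (simp only: matrix_vector_mul_assoc)
    let ?u = "v - ?w"
    have o1: "herm ?u x = 0" if "x \<in> ?H" for x
      using unitary_fix_orth[OF ut, of x ?w] that tw by (simp add: fix_space_def)
    have o2: "herm ?u x = 0" if "x \<in> ?A" for x
    proof -
      have "herm (?h *v v - v) x = 0" using unitary_fix_orth[OF uh, of x v] that IH unfolding fix_space_def by blast
      then show ?thesis by (simp add: herm_diff)
    qed
    have "herm ?u ?u = 0"
    proof -
      have "?u \<in> ?S" using SU by simp
      then obtain a b where "?u = a + b" "a \<in> ?H" "b \<in> ?A" by blast
      moreover have "herm ?u (a + b) = herm ?u a + herm ?u b" by (rule herm_add)
      ultimately show ?thesis using o1 o2 by simp
    qed
    then have "?u = 0" by (rule herm_self0)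
    then have hv: "?w = v" by simp
    then have "v \<in> ?A" using IH unfolding fix_space_def by blast
    moreover have "v \<in> ?H" using tw hv by (simp add: fix_space_def)
    ultimately show ?thesis by simp
  qed
  moreover have "v \<in> fix_space (mat_prod (t#ts))" if "v \<in> ?H \<inter> ?A" for v
  proof -
    have "?h *v v = v" "t *v v = v" using that IH unfolding fix_space_def by auto
    then have "(t ** ?h) *v v = v" by (simp only: matrix_vector_mul_assoc[symmetric])
    then show ?thesis unfolding fix_space_def mp_cons by simp
  qed
  ultimately show ?case by auto
qed



theorem mainTheorem4:
  fixes W :: "'n::finite cmat set" and g :: "'n cmat" and ts :: "'n cmat list"
    and X :: "(complex ^ 'n) set"
  assumes "cx_refl_group W"
    and "g \<in> W"
    and "reduced_refl_factorization W g ts"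
    and "flat W X"
    and "gen_group (set ts) = pstab W X"
    and "length ts = group_rank (pstab W X)"
  shows "X = fix_space g \<and> pstab W X = parabolic_closure W g
         \<and> refl_length W g = codim (fix_space g)"
proof -
  have tsr: "set ts \<subseteq> refls W" and gp: "mat_prod ts = g" and lts: "length ts = refl_length W g"
    using assms(3) unfolding reduced_refl_factorization_def by auto
  have rts: "\<forall>t\<in>set ts. reflection t" using tsr by (auto simp: refls_def)
  have genfix: "group_fix (gen_group (set ts)) = Fs ts"
  proof
    show "group_fix (gen_group (set ts)) \<subseteq> Fs ts"
    proof
      fix v assume v: "v \<in> group_fix (gen_group (set ts))"
      have "t *v v = v" if "t \<in> set ts" for t
      proof -
        have "t ** mat 1 \<in> gen_group (set ts)" by (rule gen_mul[OF that gen_one])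
        then show ?thesis using v by (simp add: group_fix_def)
      qed
      then show "v \<in> Fs ts" by (simp add: Fs_def fix_space_def)
    qed
    show "Fs ts \<subseteq> group_fix (gen_group (set ts))"
    proof
      fix v assume v: "v \<in> Fs ts"
      then have sv: "s *v v = v" if "s \<in> set ts" for s using that by (simp add: Fs_def fix_space_def)
      have "h *v v = v" if "h \<in> gen_group (set ts)" for h
        using that
      proof (induction rule: gen_group.induct)
        case gen_one then show ?case by simp
      next
        case (gen_mul s g) then show ?case using sv by (simp add: matrix_vector_mul_assoc[symmetric])
      next
        case (gen_inv s g)
        have us: "unitary s" using rts gen_inv by (simp add: reflection_def)
        have "matrix_inv s ** s = mat 1" by (rule unitary_inv[OF us])
        then have "matrix_inv s *v v = v"
          using sv[OF gen_inv(1)] by (metis matrix_vector_mul_assoc matrix_vector_mul_lid)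
        then show ?case using gen_inv by (simp add: matrix_vector_mul_assoc[symmetric])
      qed
      then show "v \<in> group_fix (gen_group (set ts))" by (simp add: group_fix_def)
    qed
  qed
  obtain T where T: "T \<subseteq> refls W" "X = (\<Inter>t\<in>T. fix_space t)" using assms(4) unfolding flat_def by blast
  have Xfix: "group_fix (pstab W X) = X"
  proof
    show "X \<subseteq> group_fix (pstab W X)" by (auto simp: group_fix_def pstab_def)
    show "group_fix (pstab W X) \<subseteq> X"
    proof
      fix v assume v: "v \<in> group_fix (pstab W X)"
      have "t \<in> pstab W X" if "t \<in> T" for t
        using that T by (auto simp: pstab_def refls_def fix_space_def)
      then show "v \<in> X" using v T(2) by (auto simp: group_fix_def fix_space_def)
    qed
  qed
  have XF: "X = Fs ts" using Xfix genfix assms(5) by simp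
  have len: "length ts = CARD('n) - vec.dim X"
    using assms(6) Xfix by (simp add: group_rank_def codim_def)
  have dimF: "vec.dim (Fs ts) = CARD('n) - length ts"
    using len XF vdim_le[of X] by simp
  have fg: "fix_space g = X"
    using main_lin[OF rts _ dimF] len XF gp by simp
  have p1: "pstab W X = parabolic_closure W g"
  proof
    show "parabolic_closure W g \<subseteq> pstab W X"
      unfolding parabolic_closure_def parabolic_def
      using assms(2) fg by (auto simp: pstab_def fix_space_def)
    show "pstab W X \<subseteq> parabolic_closure W g"
      unfolding parabolic_closure_def parabolic_def
      using fg by (auto simp: pstab_def fix_space_def)
  qed
  show ?thesis using fg p1 lts len by (simp add: codim_def)
qed

end
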